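(* Let $(\mathfrak{g},V,\Theta)$ be a Lie-Leibniz triple with associated graded Lie algebra $T_{\leq-1}$ and differential $\partial$. Then $m\circ\partial+\partial\circ m=0$ on $\Lambda^2(T_{\leq-1})$; that is, for every $i\geq1$, $\partial_{-i}\circ m_{-i-1}=-m_{-i}\circ\partial$ as maps $\Lambda^2(T_{\leq-1})|_{-i-2}\to T_{-i}$, where $\partial$ acts on $\Lambda^2$ as a graded derivation.
   Context: A (left) Leibniz algebra is a vector space $V$ with bilinear $\circ$ satisfying $x\circ(y\circ z)=(x\circ y)\circ z+y\circ(x\circ z)$; $\{x,y\}=\frac12(x\circ y+y\circ x)$. A Lie-Leibniz triple $(\mathfrak{g},V,\Theta)$ consists of a Lie algebra $\mathfrak{g}$, a $\mathfrak{g}$-module $V$ (action $a\cdot x$) with a Leibniz product $\circ$, and a linear map $\Theta:V\to\mathfrak{g}$ with $x\circ y=\Theta(x)\cdot y$ and $\Theta(x\circ y)=[\Theta(x),\Theta(y)]$. Associated graded Lie algebra: let $K$ be the largest $\mathfrak{g}$-submodule of $S^2(V)$ in the kernel of $x\odot y\mapsto\{x,y\}$; $F$ the free graded Lie algebra on $V[1]$ (degree $-1$), $F_{-2}\cong S^2(V)$, $\mathfrak g$ acting by derivations; $K_{-2}=K$, $K_{-i}=\sum_{j=1}^{i-2}[F_{-j},K_{-i+j}]$ ($i\geq3$); $T_{\leq-1}=F/K_\bullet$, $T_{-1}=V[1]$, with induced bracket $\llbracket\,.\,,.\,\rrbracket$ and $\mathfrak{g}$-action. Let $\mathfrak{h}=\mathrm{Im}\Theta$.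 The differential $\partial=(\partial_{-i}:T_{-i-1}\to T_{-i})_{i\geq1}$ is the unique family of $\mathfrak{h}$-equivariant linear maps with $\partial\llbracket u,v\rrbracket=2\{u,v\}$, $\partial\llbracket u,x\rrbracket=\Theta(u)\cdot x-\llbracket u,\partial x\rrbracket$, $\partial\llbracket x,y\rrbracket=\llbracket\partial x,y\rrbracket+(-1)^{|x|}\llbracket x,\partial y\rrbracket$ ($u,v\in T_{-1}$, $x,y\in T_{\leq-2}$); it is set to $0$ on $T_{-1}$ and extended to $\Lambda^2(T_{\leq-1})$ by $\partial(x\wedge y)=\partial x\wedge y+(-1)^{|x|}x\wedge\partial y$. The map $m:\Lambda^2(T_{\leq-1})\to T_{\leq-1}$ is $m(x\wedge y)=\Theta(x)\cdot y-(-1)^{|x||y|}\Theta(y)\cdot x$ with $\Theta:=0$ on $T_{\leq-2}$ (graded exterior algebra convention $x\wedge y=-(-1)^{|x||y|}y\wedge x$); $m_{-i}$ denotes its component landing in $T_{-i}$. *)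

theory Defs
  imports Complex_Main "HOL-Library.Function_Algebras"
begin

definition bilinear_map ::
  "('k::field \<Rightarrow> 'a::ab_group_add \<Rightarrow> 'a) \<Rightarrow> ('k \<Rightarrow> 'b::ab_group_add \<Rightarrow> 'b) \<Rightarrow>
   ('k \<Rightarrow> 'c::ab_group_add \<Rightarrow> 'c) \<Rightarrow> ('a \<Rightarrow> 'b \<Rightarrow> 'c) \<Rightarrow> bool" where
  "bilinear_map sA sB sC f \<longleftrightarrow>
     (\<forall>a a' b. f (a + a') b = f a b + f a' b) \<and>
     (\<forall>a b b'. f a (b + b') = f a b + f a b') \<and>
     (\<forall>c a b. f (sA c a) b = sC c (f a b)) \<and>
     (\<forall>c a b. f a (sB c b) = sC c (f a b))"

definition lie_algebra :: "('k::field \<Rightarrow> 'g::ab_group_add \<Rightarrow> 'g) \<Rightarrow> ('g \<Rightarrow> 'g \<Rightarrow> 'g) \<Rightarrow> bool" where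
  "lie_algebra sG brG \<longleftrightarrow>
     Vector_Spaces.vector_space sG \<and> bilinear_map sG sG sG brG \<and>
     (\<forall>a. brG a a = 0) \<and>
     (\<forall>a b c. brG a (brG b c) = brG (brG a b) c + brG b (brG a c))"

definition lie_module ::
  "('k::field \<Rightarrow> 'g::ab_group_add \<Rightarrow> 'g) \<Rightarrow> ('g \<Rightarrow> 'g \<Rightarrow> 'g) \<Rightarrow>
   ('k \<Rightarrow> 'v::ab_group_add \<Rightarrow> 'v) \<Rightarrow> ('g \<Rightarrow> 'v \<Rightarrow> 'v) \<Rightarrow> bool" where
  "lie_module sG brG sV act \<longleftrightarrow>
     Vector_Spaces.vector_space sV \<and> bilinear_map sG sV sV act \<and>
     (\<forall>a b x. act (brG a b) x = act a (act b x) - act b (act a x))"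

definition leib :: "('g \<Rightarrow> 'v \<Rightarrow> 'v) \<Rightarrow> ('v \<Rightarrow> 'g) \<Rightarrow> 'v \<Rightarrow> 'v \<Rightarrow> 'v" where
  "leib act Th x y = act (Th x) y"

definition lie_leibniz_triple ::
  "('k::field \<Rightarrow> 'g::ab_group_add \<Rightarrow> 'g) \<Rightarrow> ('g \<Rightarrow> 'g \<Rightarrow> 'g) \<Rightarrow>
   ('k \<Rightarrow> 'v::ab_group_add \<Rightarrow> 'v) \<Rightarrow> ('g \<Rightarrow> 'v \<Rightarrow> 'v) \<Rightarrow> ('v \<Rightarrow> 'g) \<Rightarrow> bool" where
  "lie_leibniz_triple sG brG sV act Th \<longleftrightarrow>
     lie_algebra sG brG \<and> lie_module sG brG sV act \<and>
     Vector_Spaces.linear sV sG Th \<and>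
     bilinear_map sV sV sV (leib act Th) \<and>
     (\<forall>x y z. leib act Th x (leib act Th y z) =
               leib act Th (leib act Th x y) z + leib act Th y (leib act Th x z)) \<and>
     (\<forall>x y. Th (leib act Th x y) = brG (Th x) (Th y))"

definition curly :: "('k::field \<Rightarrow> 'v::ab_group_add \<Rightarrow> 'v) \<Rightarrow> ('g \<Rightarrow> 'v \<Rightarrow> 'v) \<Rightarrow> ('v \<Rightarrow> 'g) \<Rightarrow> 'v \<Rightarrow> 'v \<Rightarrow> 'v" where
  "curly sV act Th x y = sV (1/2) (leib act Th x y + leib act Th y x)"

section \<open>Free vector space on binary trees with leaves in V (free non-associative algebra)\<close>

datatype 'v ltree = Lf 'v | Nd "'v ltree" "'v ltree"

fun nleaves :: "'v ltree \<Rightarrow> nat" where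
  "nleaves (Lf _) = 1"
| "nleaves (Nd a b) = nleaves a + nleaves b"

text \<open>Elements: finitely supported functions  'v ltree \<Rightarrow> 'k.  A tree with n leaves has degree -n.\<close>
definition fin :: "('v ltree \<Rightarrow> 'k::zero) \<Rightarrow> bool" where
  "fin f \<longleftrightarrow> finite {t. f t \<noteq> 0}"

definition hom :: "nat \<Rightarrow> ('v ltree \<Rightarrow> 'k::zero) \<Rightarrow> bool" where
  "hom n f \<longleftrightarrow> fin f \<and> (\<forall>t. f t \<noteq> 0 \<longrightarrow> nleaves t = n)"

definition delta :: "'v ltree \<Rightarrow> 'v ltree \<Rightarrow> 'k::{zero,one}" where
  "delta t = (\<lambda>u. if u = t then 1 else 0)"

definition smul :: "'k::times \<Rightarrow> ('v ltree \<Rightarrow> 'k) \<Rightarrow> ('v ltree \<Rightarrow> 'k)" where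
  "smul c f = (\<lambda>u. c * f u)"

definition brk :: "('v ltree \<Rightarrow> 'k::{zero,times}) \<Rightarrow> ('v ltree \<Rightarrow> 'k) \<Rightarrow> ('v ltree \<Rightarrow> 'k)" where
  "brk f h = (\<lambda>u. case u of Lf _ \<Rightarrow> 0 | Nd a b \<Rightarrow> f a * h b)"

definition sgn1 :: "nat \<Rightarrow> 'k::field" where
  "sgn1 n = (-1) ^ n"

inductive_set ideal_gen :: "('v ltree \<Rightarrow> 'k::field) set \<Rightarrow> ('v ltree \<Rightarrow> 'k) set"
  for S :: "('v ltree \<Rightarrow> 'k) set" where
  gen: "s \<in> S \<Longrightarrow> s \<in> ideal_gen S"
| zero: "0 \<in> ideal_gen S"
| add: "f \<in> ideal_gen S \<Longrightarrow> h \<in> ideal_gen S \<Longrightarrow> f + h \<in> ideal_gen S"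
| scal: "f \<in> ideal_gen S \<Longrightarrow> smul c f \<in> ideal_gen S"
| left: "f \<in> ideal_gen S \<Longrightarrow> fin h \<Longrightarrow> brk h f \<in> ideal_gen S"
| right: "f \<in> ideal_gen S \<Longrightarrow> fin h \<Longrightarrow> brk f h \<in> ideal_gen S"

text \<open>Relations making leaves linear in V.\<close>
definition lin_rel :: "('k::field \<Rightarrow> 'v::ab_group_add \<Rightarrow> 'v) \<Rightarrow> ('v ltree \<Rightarrow> 'k) set" where
  "lin_rel sV =
     {delta (Lf (x + y)) - delta (Lf x) - delta (Lf y) | x y. True} \<union>
     {delta (Lf (sV c x)) - smul c (delta (Lf x)) | c x. True}"

text \<open>Graded antisymmetry and graded Jacobi (generators in degree -1).\<close>
definition antisym_rel :: "('v ltree \<Rightarrow> 'k::field) set" where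
  "antisym_rel = {delta (Nd a b) + smul (sgn1 (nleaves a * nleaves b)) (delta (Nd b a)) | a b. True}"

definition jacobi_rel :: "('v ltree \<Rightarrow> 'k::field) set" where
  "jacobi_rel = {delta (Nd a (Nd b c)) - delta (Nd (Nd a b) c)
                   - smul (sgn1 (nleaves a * nleaves b)) (delta (Nd b (Nd a c))) | a b c. True}"

text \<open>Free graded Lie algebra F on V[1]:  F = FV / ideal_gen lie_rels.\<close>
definition lie_rels :: "('k::field \<Rightarrow> 'v::ab_group_add \<Rightarrow> 'v) \<Rightarrow> ('v ltree \<Rightarrow> 'k) set" where
  "lie_rels sV = lin_rel sV \<union> antisym_rel \<union> jacobi_rel"

fun actTree :: "('g \<Rightarrow> 'v \<Rightarrow> 'v) \<Rightarrow> 'g \<Rightarrow> 'v ltree \<Rightarrow> ('v ltree \<Rightarrow> 'k::field)" where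
  "actTree act a (Lf x) = delta (Lf (act a x))"
| "actTree act a (Nd s t) = brk (actTree act a s) (delta t) + brk (delta s) (actTree act a t)"

definition actFV :: "('g \<Rightarrow> 'v \<Rightarrow> 'v) \<Rightarrow> 'g \<Rightarrow> ('v ltree \<Rightarrow> 'k::field) \<Rightarrow> ('v ltree \<Rightarrow> 'k)" where
  "actFV act a f = (\<lambda>u. \<Sum>t\<in>{t. f t \<noteq> 0}. f t * actTree act a t u)"

text \<open>T_{-1} = V:  the class of a degree -1 element f is ev f.\<close>
definition ev :: "('k::field \<Rightarrow> 'v::ab_group_add \<Rightarrow> 'v) \<Rightarrow> ('v ltree \<Rightarrow> 'k) \<Rightarrow> 'v" where
  "ev sV f = (\<Sum>t\<in>{t. f t \<noteq> 0}. sV (f t) (case t of Lf x \<Rightarrow> x | _ \<Rightarrow> 0))"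

text \<open>F_{-2} = S^2(V) via [u,v] <-> u \<odot> v; the map  x \<odot> y \<mapsto> {x,y}  read on F_{-2}.\<close>
definition phi2 :: "('k::field \<Rightarrow> 'v::ab_group_add \<Rightarrow> 'v) \<Rightarrow> ('g \<Rightarrow> 'v \<Rightarrow> 'v) \<Rightarrow> ('v \<Rightarrow> 'g)
                    \<Rightarrow> ('v ltree \<Rightarrow> 'k) \<Rightarrow> 'v" where
  "phi2 sV act Th f = (\<Sum>t\<in>{t. f t \<noteq> 0}. sV (f t)
      (case t of Nd (Lf x) (Lf y) \<Rightarrow> curly sV act Th x y | _ \<Rightarrow> 0))"

text \<open>K: largest g-submodule of S^2(V) = F_{-2} contained in the kernel of  x \<odot> y \<mapsto> {x,y}
  (union of all g-invariant subspaces of the degree -2 part lying in the kernel).\<close>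
definition Kset :: "('k::field \<Rightarrow> 'v::ab_group_add \<Rightarrow> 'v) \<Rightarrow> ('g \<Rightarrow> 'v \<Rightarrow> 'v) \<Rightarrow> ('v \<Rightarrow> 'g)
                    \<Rightarrow> ('v ltree \<Rightarrow> 'k) set" where
  "Kset sV act Th = \<Union>{W. W \<subseteq> {f. hom 2 f} \<and> 0 \<in> W \<and>
        (\<forall>f\<in>W. \<forall>h\<in>W. f + h \<in> W) \<and> (\<forall>c. \<forall>f\<in>W. smul c f \<in> W) \<and>
        (\<forall>a. \<forall>f\<in>W. actFV act a f \<in> W) \<and>
        (\<forall>f\<in>W. phi2 sV act Th f = 0)}"

text \<open>T_{\<le>-1} = F / K_\<bullet> = FV / Irel, where Irel is the ideal generated by the free Lie relations
  and K (the ideal K_\<bullet> of F generated by K_{-2} = K is its image in F).\<close>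
definition Irel :: "('k::field \<Rightarrow> 'v::ab_group_add \<Rightarrow> 'v) \<Rightarrow> ('g \<Rightarrow> 'v \<Rightarrow> 'v) \<Rightarrow> ('v \<Rightarrow> 'g)
                    \<Rightarrow> ('v ltree \<Rightarrow> 'k) set" where
  "Irel sV act Th = ideal_gen (lie_rels sV \<union> Kset sV act Th)"

text \<open>\<Theta>(x)\<cdot>y for x \<in> T_{-p}, with \<Theta> := 0 on T_{\<le>-2}.\<close>
definition thact :: "('k::field \<Rightarrow> 'v::ab_group_add \<Rightarrow> 'v) \<Rightarrow> ('g \<Rightarrow> 'v \<Rightarrow> 'v) \<Rightarrow> ('v \<Rightarrow> 'g)
                     \<Rightarrow> nat \<Rightarrow> ('v ltree \<Rightarrow> 'k) \<Rightarrow> ('v ltree \<Rightarrow> 'k) \<Rightarrow> ('v ltree \<Rightarrow> 'k)" where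
  "thact sV act Th p x y = (if p = 1 then actFV act (Th (ev sV x)) y else 0)"

definition mwedge :: "('k::field \<Rightarrow> 'v::ab_group_add \<Rightarrow> 'v) \<Rightarrow> ('g \<Rightarrow> 'v \<Rightarrow> 'v) \<Rightarrow> ('v \<Rightarrow> 'g)
                     \<Rightarrow> nat \<Rightarrow> nat \<Rightarrow> ('v ltree \<Rightarrow> 'k) \<Rightarrow> ('v ltree \<Rightarrow> 'k) \<Rightarrow> ('v ltree \<Rightarrow> 'k)" where
  "mwedge sV act Th p q x y =
     thact sV act Th p x y - smul (sgn1 (p * q)) (thact sV act Th q y x)"

section \<open>The differential \<partial> (on representatives, equations modulo Irel)\<close>

definition is_differential ::
  "('k::field \<Rightarrow> 'v::ab_group_add \<Rightarrow> 'v) \<Rightarrow> ('g \<Rightarrow> 'v \<Rightarrow> 'v) \<Rightarrow> ('v \<Rightarrow> 'g)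
   \<Rightarrow> (('v ltree \<Rightarrow> 'k) \<Rightarrow> ('v ltree \<Rightarrow> 'k)) \<Rightarrow> bool" where
  "is_differential sV act Th D \<longleftrightarrow>
     \<comment> \<open>linear\<close>
     (\<forall>f h. fin f \<longrightarrow> fin h \<longrightarrow> D (f + h) = D f + D h) \<and>
     (\<forall>c f. fin f \<longrightarrow> D (smul c f) = smul c (D f)) \<and>
     \<comment> \<open>well defined on the quotient T\<close>
     (\<forall>f \<in> Irel sV act Th. D f \<in> Irel sV act Th) \<and>
     \<comment> \<open>\<partial>_{-i} : T_{-i-1} \<rightarrow> T_{-i} (i \<ge> 1), and \<partial> = 0 on T_{-1}\<close>
     (\<forall>n f. n \<ge> 1 \<longrightarrow> hom (Suc n) f \<longrightarrow> hom n (D f)) \<and>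
     (\<forall>f. hom 1 f \<longrightarrow> D f \<in> Irel sV act Th) \<and>
     \<comment> \<open>equivariance under h = Im \<Theta>\<close>
     (\<forall>x f. fin f \<longrightarrow> D (actFV act (Th x) f) - actFV act (Th x) (D f) \<in> Irel sV act Th) \<and>
     \<comment> \<open>\<partial>[u,v] = 2{u,v}\<close>
     (\<forall>u v. hom 1 u \<longrightarrow> hom 1 v \<longrightarrow>
        D (brk u v) - smul 2 (delta (Lf (curly sV act Th (ev sV u) (ev sV v)))) \<in> Irel sV act Th) \<and>
     \<comment> \<open>\<partial>[u,x] = \<Theta>(u)\<cdot>x - [u,\<partial>x]\<close>
     (\<forall>u x p. hom 1 u \<longrightarrow> p \<ge> 2 \<longrightarrow> hom p x \<longrightarrow>
        D (brk u x) - (actFV act (Th (ev sV u)) x - brk u (D x)) \<in> Irel sV act Th) \<and>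
     \<comment> \<open>\<partial>[x,y] = [\<partial>x,y] + (-1)^{|x|}[x,\<partial>y]\<close>
     (\<forall>x y p q. p \<ge> 2 \<longrightarrow> q \<ge> 2 \<longrightarrow> hom p x \<longrightarrow> hom q y \<longrightarrow>
        D (brk x y) - (brk (D x) y + smul (sgn1 p) (brk x (D y))) \<in> Irel sV act Th)"

end

theory Submission
  imports Defs
begin

lemma sum_fun_app: "(\<Sum>t\<in>S. g t) u = (\<Sum>t\<in>S. g t u)"
  by (induction S rule: infinite_finite_induct) auto

lemma fin_zero[simp]: "fin 0" by (simp add: fin_def)
lemma fin_delta[simp]: "fin (delta t)" by (simp add: fin_def delta_def)
lemma fin_add: "fin (f::_\<Rightarrow>'k::field) \<Longrightarrow> fin h \<Longrightarrow> fin (f + h)"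
  unfolding fin_def by (rule finite_subset[of _ "{t. f t \<noteq> 0} \<union> {t. h t \<noteq> 0}"]) auto
lemma fin_smul: "fin (f::_\<Rightarrow>'k::field) \<Longrightarrow> fin (smul c f)"
  unfolding fin_def smul_def by (rule finite_subset[of _ "{t. f t \<noteq> 0}"]) auto
lemma fin_brk: "fin (f::_\<Rightarrow>'k::field) \<Longrightarrow> fin h \<Longrightarrow> fin (brk f h)"
proof -
  assume a: "fin f" "fin h"
  have "{t. brk f h t \<noteq> 0} \<subseteq> (\<lambda>(a,b). Nd a b) ` ({t. f t \<noteq> 0} \<times> {t. h t \<noteq> 0})"
  proof
    fix t assume "t \<in> {t. brk f h t \<noteq> 0}"
    then show "t \<in> (\<lambda>(a,b). Nd a b) ` ({t. f t \<noteq> 0} \<times> {t. h t \<noteq> 0})"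
      by (cases t) (force simp: brk_def)+
  qed
  then show ?thesis using a unfolding fin_def by (meson finite_SigmaI finite_imageI finite_subset)
qed
lemma fin_sub: "fin (f::_\<Rightarrow>'k::field) \<Longrightarrow> fin h \<Longrightarrow> fin (f - h)"
  unfolding fin_def by (rule finite_subset[of _ "{t. f t \<noteq> 0} \<union> {t. h t \<noteq> 0}"]) auto
lemma fin_sum: "(\<And>t. t \<in> S \<Longrightarrow> fin (g t::_\<Rightarrow>'k::field)) \<Longrightarrow> fin (\<Sum>t\<in>S. g t)"
  by (induction S rule: infinite_finite_induct) (auto intro: fin_add)
lemma hom_fin: "hom n f \<Longrightarrow> fin f" by (simp add: hom_def)

lemma fin_decomp: "fin (f::_\<Rightarrow>'k::field) \<Longrightarrow> f = (\<Sum>t\<in>{t. f t \<noteq> 0}. smul (f t) (delta t))"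
proof (rule ext)
  fix u assume "fin f"
  have "(\<Sum>t\<in>{t. f t \<noteq> 0}. smul (f t) (delta t)) u = (\<Sum>t\<in>{t. f t \<noteq> 0}. (if t = u then f t else 0))"
    by (auto simp: sum_fun_app smul_def delta_def intro: sum.cong)
  also have "\<dots> = f u" using \<open>fin f\<close> by (simp add: sum.If_cases fin_def) 
  finally show "f u = (\<Sum>t\<in>{t. f t \<noteq> 0}. smul (f t) (delta t)) u" by simp
qed

lemma fin_actTree: "fin (actTree act a t :: _ \<Rightarrow> 'k::field)"
proof (induction t)
  case (Nd t1 t2)
  then show ?case by (simp only: actTree.simps) (intro fin_add fin_brk; simp)
qed simp

lemma actFV_sum: "fin f \<Longrightarrow> actFV act a f = (\<Sum>t\<in>{t. f t \<noteq> 0}. smul (f t) (actTree act a t))"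
  by (rule ext) (simp add: actFV_def sum_fun_app smul_def)

lemma fin_actFV: "fin f \<Longrightarrow> fin (actFV act a f)"
  by (simp add: actFV_sum fin_sum fin_smul fin_actTree)

lemma nleaves_pos: "nleaves t \<ge> 1" by (induction t) auto
lemma nleaves1: "nleaves t = 1 \<Longrightarrow> \<exists>a. t = Lf a"
proof (cases t)
  case (Nd l r) assume "nleaves t = 1"
  with Nd nleaves_pos[of l] nleaves_pos[of r] show ?thesis by simp
qed simp
lemma nleaves2: "nleaves t = 2 \<Longrightarrow> \<exists>a b. t = Nd (Lf a) (Lf b)"
proof (cases t)
  case (Nd l r) assume "nleaves t = 2"
  with Nd nleaves_pos[of l] nleaves_pos[of r] have "nleaves l = 1" "nleaves r = 1" by auto
  with Nd show ?thesis using nleaves1 by blast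
qed simp

lemma I_add: "f \<in> ideal_gen S \<Longrightarrow> h \<in> ideal_gen S \<Longrightarrow> f + h \<in> ideal_gen S" by (rule ideal_gen.add)
lemma smul_m1: "smul (-1) (f::_\<Rightarrow>'k::field) = - f" by (simp add: smul_def fun_eq_iff)
lemma I_neg: "f \<in> ideal_gen S \<Longrightarrow> - f \<in> ideal_gen S"
  using ideal_gen.scal[of f S "-1"] by (simp add: smul_m1)
lemma I_diff: "f \<in> ideal_gen S \<Longrightarrow> h \<in> ideal_gen S \<Longrightarrow> f - h \<in> ideal_gen S"
  using I_add I_neg by (metis diff_conv_add_uminus)
lemma I_sum: "(\<And>t. t \<in> A \<Longrightarrow> g t \<in> ideal_gen S) \<Longrightarrow> (\<Sum>t\<in>A. g t) \<in> ideal_gen S"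
  by (induction A rule: infinite_finite_induct) (auto intro: ideal_gen.zero ideal_gen.add)

lemma I_fin: "f \<in> Irel sV act Th \<Longrightarrow> fin f"
  unfolding Irel_def
proof (induction rule: ideal_gen.induct)
  case (gen s)
  then show ?case
    unfolding lie_rels_def lin_rel_def antisym_rel_def jacobi_rel_def Kset_def hom_def
    by (elim UnE CollectE exE conjE UnionE) (simp_all only: fin_sub fin_add fin_smul fin_delta, blast+)
qed (blast intro: fin_zero fin_add fin_smul fin_brk)+

definition lv :: "'v::zero ltree \<Rightarrow> 'v" where "lv t = (case t of Lf x \<Rightarrow> x | _ \<Rightarrow> 0)"

context
  fixes sV :: "'k::field \<Rightarrow> 'v::ab_group_add \<Rightarrow> 'v"
  assumes VS: "Vector_Spaces.vector_space sV"
begin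
interpretation V: Vector_Spaces.vector_space sV by (rule VS)

lemma ev_sup: "finite S \<Longrightarrow> {t. f t \<noteq> 0} \<subseteq> S \<Longrightarrow> ev sV f = (\<Sum>t\<in>S. sV (f t) (lv t))"
  unfolding ev_def lv_def by (rule sum.mono_neutral_left) auto

lemma ev_add: "fin f \<Longrightarrow> fin h \<Longrightarrow> ev sV (f + h) = ev sV f + ev sV h"
proof -
  assume a: "fin f" "fin h"
  let ?S = "{t. f t \<noteq> 0} \<union> {t. h t \<noteq> 0}"
  have fS: "finite ?S" using a by (simp add: fin_def)
  have "ev sV (f + h) = (\<Sum>t\<in>?S. sV ((f+h) t) (lv t))" by (rule ev_sup[OF fS]) auto
  also have "\<dots> = (\<Sum>t\<in>?S. sV (f t) (lv t)) + (\<Sum>t\<in>?S. sV (h t) (lv t))"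
    by (simp add: V.scale_left_distrib sum.distrib)
  also have "\<dots> = ev sV f + ev sV h" using ev_sup[OF fS, of f] ev_sup[OF fS, of h] by auto
  finally show ?thesis .
qed

lemma ev_sub: "fin f \<Longrightarrow> fin h \<Longrightarrow> ev sV (f - h) = ev sV f - ev sV h"
proof -
  assume a: "fin f" "fin h"
  let ?S = "{t. f t \<noteq> 0} \<union> {t. h t \<noteq> 0}"
  have fS: "finite ?S" using a by (simp add: fin_def)
  have "ev sV (f - h) = (\<Sum>t\<in>?S. sV ((f-h) t) (lv t))" by (rule ev_sup[OF fS]) auto
  also have "\<dots> = (\<Sum>t\<in>?S. sV (f t) (lv t)) - (\<Sum>t\<in>?S. sV (h t) (lv t))"
    by (simp add: V.scale_left_diff_distrib sum_subtractf)
  also have "\<dots> = ev sV f - ev sV h" using ev_sup[OF fS, of f] ev_sup[OF fS, of h] by auto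
  finally show ?thesis .
qed

lemma ev_smul: "fin f \<Longrightarrow> ev sV (smul c f) = sV c (ev sV f)"
proof -
  assume a: "fin f"
  let ?S = "{t. f t \<noteq> 0}"
  have fS: "finite ?S" using a by (simp add: fin_def)
  have "ev sV (smul c f) = (\<Sum>t\<in>?S. sV (smul c f t) (lv t))" by (rule ev_sup[OF fS]) (auto simp: smul_def)
  also have "\<dots> = sV c (\<Sum>t\<in>?S. sV (f t) (lv t))"
    by (simp add: V.scale_sum_right smul_def)
  also have "\<dots> = sV c (ev sV f)" using ev_sup[OF fS, of f] by auto
  finally show ?thesis .
qed

lemma ev_zero: "ev sV 0 = 0" by (simp add: ev_def)

lemma ev_delta: "ev sV (delta (Lf a)) = a"
  by (subst ev_sup[of "{Lf a}"]) (auto simp: delta_def lv_def)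

lemma ev_sum: "(\<And>t. t \<in> A \<Longrightarrow> fin (g t)) \<Longrightarrow> ev sV (\<Sum>t\<in>A. g t) = (\<Sum>t\<in>A. ev sV (g t))"
  by (induction A rule: infinite_finite_induct) (auto simp: ev_zero ev_add fin_sum)

lemma ev_noleaf: "(\<And>x. f (Lf x) = 0) \<Longrightarrow> ev sV f = 0"
  unfolding ev_def by (rule sum.neutral) (auto split: ltree.splits)

lemma ev_Irel: "f \<in> Irel sV act Th \<Longrightarrow> ev sV f = 0"
proof -
  assume "f \<in> Irel sV act Th"
  then have "f \<in> ideal_gen (lie_rels sV \<union> Kset sV act Th)" by (simp add: Irel_def)
  then show ?thesis
  proof (induction rule: ideal_gen.induct)
    case (gen s)
    from gen have "s \<in> lin_rel sV \<or> s \<in> antisym_rel \<or> s \<in> jacobi_rel \<or> s \<in> Kset sV act Th"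
      by (simp add: lie_rels_def)
    then show ?case
    proof (elim disjE)
      assume "s \<in> lin_rel sV"
      then show ?thesis unfolding lin_rel_def
        by (elim UnE CollectE exE conjE; simp only: ev_sub fin_sub fin_smul fin_delta ev_smul ev_delta; simp)
    next
      assume "s \<in> antisym_rel" then show ?thesis unfolding antisym_rel_def
        by (auto intro!: ev_noleaf simp: delta_def smul_def)
    next
      assume "s \<in> jacobi_rel" then show ?thesis unfolding jacobi_rel_def
        by (auto intro!: ev_noleaf simp: delta_def smul_def)
    next
      assume "s \<in> Kset sV act Th"
      then have "hom 2 s" unfolding Kset_def by blast
      then show ?thesis unfolding hom_def by (intro ev_noleaf) (metis nleaves.simps(1) numeral_One numeral_eq_iff semiring_norm(85))
    qed
  next
    case zero then show ?case by (rule ev_zero)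
  next
    case (add f h) then show ?case using I_fin[of _ sV act Th] by (simp only: Irel_def ev_add) simp
  next
    case (scal f c) then show ?case using I_fin[of _ sV act Th] by (simp add: Irel_def ev_smul)
  qed (auto intro: ev_noleaf simp: brk_def)
qed

end


context
  fixes sG :: "'k::field \<Rightarrow> 'g::ab_group_add \<Rightarrow> 'g"
    and brG :: "'g \<Rightarrow> 'g \<Rightarrow> 'g"
    and sV :: "'k \<Rightarrow> 'v::ab_group_add \<Rightarrow> 'v"
    and act :: "'g \<Rightarrow> 'v \<Rightarrow> 'v"
    and Th :: "'v \<Rightarrow> 'g"
    and D :: "('v ltree \<Rightarrow> 'k) \<Rightarrow> ('v ltree \<Rightarrow> 'k)"
  assumes LLT: "lie_leibniz_triple sG brG sV act Th"
    and DIF: "is_differential sV act Th D"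
begin

lemma LA: "lie_algebra sG brG" using LLT by (simp add: lie_leibniz_triple_def)
lemma LM: "lie_module sG brG sV act" using LLT by (simp add: lie_leibniz_triple_def)
lemma VSV: "Vector_Spaces.vector_space sV" using LM by (simp add: lie_module_def)
lemma VSG: "Vector_Spaces.vector_space sG" using LA by (simp add: lie_algebra_def)
lemma LTh: "Vector_Spaces.linear sV sG Th" using LLT by (simp add: lie_leibniz_triple_def)

lemma D_add: "fin f \<Longrightarrow> fin h \<Longrightarrow> D (f + h) = D f + D h" using DIF by (simp add: is_differential_def)
lemma D_smul: "fin f \<Longrightarrow> D (smul c f) = smul c (D f)" using DIF by (simp add: is_differential_def)
lemma D_hom: "n \<ge> 1 \<Longrightarrow> hom (Suc n) f \<Longrightarrow> hom n (D f)" using DIF by (simp add: is_differential_def)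
lemma D_equiv: "fin f \<Longrightarrow> D (actFV act (Th x) f) - actFV act (Th x) (D f) \<in> Irel sV act Th"
  using DIF by (simp add: is_differential_def)
lemma D_uv: "hom 1 u \<Longrightarrow> hom 1 v \<Longrightarrow>
        D (brk u v) - smul 2 (delta (Lf (curly sV act Th (ev sV u) (ev sV v)))) \<in> Irel sV act Th"
  using DIF by (simp add: is_differential_def)

lemma D_zero: "D 0 = 0"
  using D_add[of 0 0] by simp

lemma D_sum: "(\<And>t. t \<in> A \<Longrightarrow> fin (g t)) \<Longrightarrow> D (\<Sum>t\<in>A. g t) = (\<Sum>t\<in>A. D (g t))"
  by (induction A rule: infinite_finite_induct) (auto simp: D_zero D_add fin_sum)

lemma act0: "act 0 v = 0"
proof -
  have "\<forall>a a' b. act (a + a') b = act a b + act a' b" using LM by (simp add: lie_module_def bilinear_map_def)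
  from this[rule_format, of 0 0 v] show ?thesis by simp
qed

lemma delta0_I: "delta (Lf 0) \<in> Irel sV act Th"
proof -
  have "delta (Lf (0 + 0)) - delta (Lf 0) - delta (Lf 0) \<in> Irel sV act Th"
  proof -
    have "delta (Lf (0 + 0)) - delta (Lf 0) - delta (Lf 0) \<in> lin_rel sV" unfolding lin_rel_def by blast
    then show ?thesis unfolding Irel_def lie_rels_def by (intro ideal_gen.gen) blast
  qed
  then have "- delta (Lf 0) \<in> Irel sV act Th" by simp
  then show ?thesis unfolding Irel_def by (metis I_neg minus_minus)
qed

lemma actTree0_I: "actTree act 0 t \<in> Irel sV act Th"
proof (induction t)
  case (Lf x) then show ?case by (simp add: act0 delta0_I)
next
  case (Nd t1 t2)
  then show ?case unfolding Irel_def actTree.simps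
    by (intro ideal_gen.add ideal_gen.left ideal_gen.right) auto
qed

lemma actFV0_I: "fin f \<Longrightarrow> actFV act 0 f \<in> Irel sV act Th"
  unfolding actFV_sum Irel_def
  by (intro I_sum ideal_gen.scal actTree0_I[unfolded Irel_def])

lemma anticomm: "brG x y + brG y x = 0"
proof -
  have B: "bilinear_map sG sG sG brG" and Z: "\<And>a. brG a a = 0" using LA by (auto simp: lie_algebra_def)
  have "brG (x + y) (x + y) = brG x x + brG x y + (brG y x + brG y y)"
    using B by (simp add: bilinear_map_def)
  then show ?thesis using Z by simp
qed

lemma Th_curly: "Th (curly sV act Th a b) = 0"
proof -
  interpret L: Vector_Spaces.linear sV sG Th by (rule LTh)
  have T: "\<And>x y. Th (leib act Th x y) = brG (Th x) (Th y)" using LLT by (simp add: lie_leibniz_triple_def)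
  show ?thesis unfolding curly_def using L.scale L.add T anticomm L.vs2.scale_zero_right by simp
qed

lemma hom1_delta: "hom 1 (delta (Lf a) :: _ \<Rightarrow> 'k)" by (simp add: hom_def fin_def delta_def)

lemma ThevD_delta: "nleaves t = 2 \<Longrightarrow> Th (ev sV (D (delta t))) = 0"
proof -
  interpret L: Vector_Spaces.linear sV sG Th by (rule LTh)
  assume "nleaves t = 2"
  then obtain a b where t: "t = Nd (Lf a) (Lf b)" using nleaves2 by blast
  have dt: "(delta t :: _ \<Rightarrow> 'k) = brk (delta (Lf a)) (delta (Lf b))"
    by (auto simp: t brk_def delta_def fun_eq_iff split: ltree.splits)
  have hd: "hom 2 (delta t)" using \<open>nleaves t = 2\<close> by (simp add: hom_def fin_def delta_def)
  then have "hom 1 (D (delta t))" using D_hom[of 1 "delta t"] by (simp add: numeral_2_eq_2)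
  then have fD: "fin (D (delta t))" by (rule hom_fin)
  have r: "D (delta t) - smul 2 (delta (Lf (curly sV act Th a b))) \<in> Irel sV act Th"
    using D_uv[OF hom1_delta hom1_delta, of a b] by (simp add: dt ev_delta[OF VSV])
  have "ev sV (D (delta t) - smul 2 (delta (Lf (curly sV act Th a b)))) = 0"
    by (rule ev_Irel[OF VSV r])
  then have "ev sV (D (delta t)) = sV 2 (curly sV act Th a b)"
    by (simp add: ev_sub[OF VSV] fD fin_smul ev_smul[OF VSV] ev_delta[OF VSV])
  then show ?thesis using L.scale Th_curly by simp
qed

lemma ThevD2: "hom 2 x \<Longrightarrow> Th (ev sV (D x)) = 0"
proof -
  interpret L: Vector_Spaces.linear sV sG Th by (rule LTh)
  assume h: "hom 2 x"
  let ?S = "{t. x t \<noteq> 0}"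
  have S2: "\<And>t. t \<in> ?S \<Longrightarrow> nleaves t = 2" using h by (simp add: hom_def)
  have fDd: "\<And>t. t \<in> ?S \<Longrightarrow> fin (D (delta t))"
  proof -
    fix t assume "t \<in> ?S"
    then have "hom (Suc 1) (delta t :: _ \<Rightarrow> 'k)" using S2 by (simp add: hom_def fin_def delta_def)
    then show "fin (D (delta t))" using D_hom[of 1 "delta t"] by (simp add: hom_def)
  qed
  have "D x = D (\<Sum>t\<in>?S. smul (x t) (delta t))" using fin_decomp[OF hom_fin[OF h]] by simp
  also have "\<dots> = (\<Sum>t\<in>?S. smul (x t) (D (delta t)))"
    by (simp add: D_sum fin_smul D_smul)
  finally have "ev sV (D x) = ev sV (\<Sum>t\<in>?S. smul (x t) (D (delta t)))" by simp
  also have "\<dots> = (\<Sum>t\<in>?S. ev sV (smul (x t) (D (delta t))))"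
    by (rule ev_sum[OF VSV], rule fin_smul, rule fDd)
  also have "\<dots> = (\<Sum>t\<in>?S. sV (x t) (ev sV (D (delta t))))"
    by (rule sum.cong[OF refl], rule ev_smul[OF VSV], rule fDd)
  finally have "ev sV (D x) = (\<Sum>t\<in>?S. sV (x t) (ev sV (D (delta t))))" .
  then show ?thesis using S2 ThevD_delta by (simp add: L.sum L.scale)
qed

lemma L1: "r \<ge> 1 \<Longrightarrow> hom (Suc r) y \<Longrightarrow> fin x \<Longrightarrow> thact sV act Th r (D y) x \<in> Irel sV act Th"
proof (cases "r = 1")
  case True
  assume "hom (Suc r) y" "fin x"
  then show ?thesis using True ThevD2[of y] actFV0_I by (simp add: thact_def numeral_2_eq_2)
next
  case False then show ?thesis by (simp add: thact_def Irel_def ideal_gen.zero)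
qed

end


lemma sgn1_pred: "p \<ge> 1 \<Longrightarrow> (sgn1 (p - 1) :: 'k::field) = - sgn1 p"
  by (cases p) (auto simp: sgn1_def)

lemma smul_zero[simp]: "smul c (0::_\<Rightarrow>'k::field) = 0" by (simp add: smul_def fun_eq_iff)

lemma diff_lam0[simp]: "f - (\<lambda>u. 0::'k::ab_group_add) = f" by (simp add: fun_eq_iff)

lemma thact_1: "p = 1 \<Longrightarrow> thact sV act Th p x z = actFV act (Th (ev sV x)) z"
  by (simp add: thact_def)
lemma thact_n1: "p \<noteq> 1 \<Longrightarrow> thact sV act Th p x z = 0"
  by (simp add: thact_def)

theorem mainTheorem9:
  fixes sG :: "'k::field_char_0 \<Rightarrow> 'g::ab_group_add \<Rightarrow> 'g"
    and brG :: "'g \<Rightarrow> 'g \<Rightarrow> 'g"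
    and sV :: "'k \<Rightarrow> 'v::ab_group_add \<Rightarrow> 'v"
    and act :: "'g \<Rightarrow> 'v \<Rightarrow> 'v"
    and Th :: "'v \<Rightarrow> 'g"
    and D :: "('v ltree \<Rightarrow> 'k) \<Rightarrow> ('v ltree \<Rightarrow> 'k)"
  assumes "lie_leibniz_triple sG brG sV act Th"
    and "is_differential sV act Th D"
  shows "\<forall>p q x y. p \<ge> 1 \<longrightarrow> q \<ge> 1 \<longrightarrow> p + q \<ge> 3 \<longrightarrow> hom p x \<longrightarrow> hom q y \<longrightarrow>
           D (mwedge sV act Th p q x y)
           + (if p \<ge> 2 then mwedge sV act Th (p - 1) q (D x) y else 0)
           + smul (sgn1 p) (if q \<ge> 2 then mwedge sV act Th p (q - 1) x (D y) else 0)
           \<in> Irel sV act Th"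
proof (intro allI impI)
  fix p q :: nat and x y :: "'v ltree \<Rightarrow> 'k"
  assume p1: "p \<ge> (1::nat)" and q1: "q \<ge> (1::nat)" and pq: "p + q \<ge> 3" and hx: "hom p x" and hy: "hom q y"
  note LL = assms(1) and DD = assms(2)
  have fx: "fin x" and fy: "fin y" using hx hy by (auto intro: hom_fin)
  have Iadd: "\<And>f h. f \<in> Irel sV act Th \<Longrightarrow> h \<in> Irel sV act Th \<Longrightarrow> f + h \<in> Irel sV act Th"
    unfolding Irel_def by (rule ideal_gen.add)
  have Ism: "\<And>f c. f \<in> Irel sV act Th \<Longrightarrow> smul c f \<in> Irel sV act Th"
    unfolding Irel_def by (rule ideal_gen.scal)
  consider (a) "p = 1" "q \<ge> 2" | (b) "q = 1" "p \<ge> 2" | (c) "p \<ge> 2" "q \<ge> 2" using p1 q1 pq by linarith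
  then show "D (mwedge sV act Th p q x y)
           + (if p \<ge> 2 then mwedge sV act Th (p - 1) q (D x) y else 0)
           + smul (sgn1 p) (if q \<ge> 2 then mwedge sV act Th p (q - 1) x (D y) else 0)
           \<in> Irel sV act Th"
  proof cases
    case a
    let ?a = "Th (ev sV x)"
    have E: "D (actFV act ?a y) - actFV act ?a (D y) \<in> Irel sV act Th"
      by (rule D_equiv[OF LL DD fy])
    have T: "thact sV act Th (q - 1) (D y) x \<in> Irel sV act Th"
      using a hy fx by (intro L1[OF LL DD]) auto
    have "D (mwedge sV act Th p q x y)
           + (if p \<ge> 2 then mwedge sV act Th (p - 1) q (D x) y else 0)
           + smul (sgn1 p) (if q \<ge> 2 then mwedge sV act Th p (q - 1) x (D y) else 0)
          = (D (actFV act ?a y) - actFV act ?a (D y)) + smul (sgn1 (q - 1)) (thact sV act Th (q - 1) (D y) x)"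
      using a by (simp add: mwedge_def thact_1 thact_n1 sgn1_def smul_def fun_eq_iff)
    then show ?thesis using Iadd[OF E Ism[OF T]] by simp
  next
    case b
    let ?b = "Th (ev sV y)"
    have E: "D (actFV act ?b x) - actFV act ?b (D x) \<in> Irel sV act Th"
      by (rule D_equiv[OF LL DD fx])
    have T: "thact sV act Th (p - 1) (D x) y \<in> Irel sV act Th"
      using b hx fy by (intro L1[OF LL DD]) auto
    have "D (mwedge sV act Th p q x y) = smul (- sgn1 p) (D (actFV act ?b x))"
    proof -
      have "mwedge sV act Th p q x y = smul (- sgn1 p) (actFV act ?b x)"
        using b by (simp add: mwedge_def thact_def smul_def fun_eq_iff)
      then show ?thesis using D_smul[OF LL DD fin_actFV[OF fx]] by simp
    qed
    moreover have "mwedge sV act Th (p - 1) q (D x) y = thact sV act Th (p - 1) (D x) y + smul (sgn1 p) (actFV act ?b (D x))"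
      using b sgn1_pred[of p, where 'k='k] by (simp add: mwedge_def thact_1 thact_n1 smul_def fun_eq_iff)
    ultimately have "D (mwedge sV act Th p q x y)
           + (if p \<ge> 2 then mwedge sV act Th (p - 1) q (D x) y else 0)
           + smul (sgn1 p) (if q \<ge> 2 then mwedge sV act Th p (q - 1) x (D y) else 0)
          = smul (- sgn1 p) (D (actFV act ?b x) - actFV act ?b (D x)) + thact sV act Th (p - 1) (D x) y"
      using b by (simp add: smul_def fun_eq_iff algebra_simps)
    then show ?thesis using Iadd[OF Ism[OF E] T] by simp
  next
    case c
    have T1: "thact sV act Th (p - 1) (D x) y \<in> Irel sV act Th"
      using c hx fy by (intro L1[OF LL DD]) auto
    have T2: "thact sV act Th (q - 1) (D y) x \<in> Irel sV act Th"
      using c hy fx by (intro L1[OF LL DD]) auto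
    have "mwedge sV act Th p q x y = 0" using c by (simp add: mwedge_def thact_def)
    then have "D (mwedge sV act Th p q x y)
           + (if p \<ge> 2 then mwedge sV act Th (p - 1) q (D x) y else 0)
           + smul (sgn1 p) (if q \<ge> 2 then mwedge sV act Th p (q - 1) x (D y) else 0)
          = thact sV act Th (p - 1) (D x) y + smul (- (sgn1 p * sgn1 (p * (q - 1)))) (thact sV act Th (q - 1) (D y) x)"
      using c D_zero[OF LL DD] by (simp add: mwedge_def thact_n1 smul_def fun_eq_iff)
    then show ?thesis using Iadd[OF T1 Ism[OF T2]] by simp
  qed
qed

end
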